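(* In the standing setting, for every $a'\in P'$ we have $g'(\downarrow\{a'\})=\downarrow f^{-1}(a')$, where $\downarrow\{a'\}=\{b'\in P': b'\preceq' a'\}\in Q'$ and $\downarrow f^{-1}(a')=\{b\in P:\ \exists a\in f^{-1}(a') \text{ with } b\preceq a\}$.
   Context: Standing setting: $(P,\preceq)$ is a finite poset with a bottom and a top element; $f:P\to P'$ is a surjective map onto $P'=f(P)$; $f^{-1}(a')=\{a\in P: f(a)=a'\}$; the relation $\preceq'$ on $P'$ is defined by $b'\preceq' a'$ iff there exist $a\in f^{-1}(a')$, $b\in f^{-1}(b')$ with $b\preceq a$. Assume the three conditions: (D) for all $a',b'\in P'$ with $b'\preceq' a'$ and every $a\in f^{-1}(a')$ there is $b\in f^{-1}(b')$ with $b\preceq a$; (U) for all $a',b'\in P'$ with $b'\preceq' a'$ and every $b\in f^{-1}(b')$ there is $a\in f^{-1}(a')$ with $b\preceq a$; (S) for all $a,b,c\in P$, if $c\preceq b\preceq a$ and $f(c)=f(a)$ then $f(b)=f(a)$. (Then $(P',\preceq')$ is a poset.) A down-set of a poset is a subset $A$ such that $a\in A$ and $b\preceq a$ imply $b\in A$. $Q$ is the set of nonempty down-sets of $(P,\preceq)$ and $Q'$ the set of nonempty down-sets of $(P',\preceq')$, each ordered by inclusion. $g:2^P\to 2^{P'}$ is $g(A)=\{f(a):a\in A\}$. For $A'\in Q'$, $g^{-1}(A')=\{A\in Q: g(A)=A'\}$ and $g'(A')=\bigcup_{A\in g^{-1}(A')}A$. *)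

theory Defs
  imports Main
begin

definition poset_on :: "'a set \<Rightarrow> ('a \<Rightarrow> 'a \<Rightarrow> bool) \<Rightarrow> bool" where
  "poset_on P le \<longleftrightarrow>
     (\<forall>a\<in>P. le a a) \<and>
     (\<forall>a\<in>P. \<forall>b\<in>P. le a b \<and> le b a \<longrightarrow> a = b) \<and>
     (\<forall>a\<in>P. \<forall>b\<in>P. \<forall>c\<in>P. le a b \<and> le b c \<longrightarrow> le a c)"

text \<open>The induced relation on P' = f ` P: quot_le P le f b' a' means b' is below a'.\<close>

definition quot_le :: "'a set \<Rightarrow> ('a \<Rightarrow> 'a \<Rightarrow> bool) \<Rightarrow> ('a \<Rightarrow> 'b) \<Rightarrow> 'b \<Rightarrow> 'b \<Rightarrow> bool" where
  "quot_le P le f b' a' \<longleftrightarrow> (\<exists>a\<in>P. \<exists>b\<in>P. f a = a' \<and> f b = b' \<and> le b a)"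

definition down_set :: "'a set \<Rightarrow> ('a \<Rightarrow> 'a \<Rightarrow> bool) \<Rightarrow> 'a set \<Rightarrow> bool" where
  "down_set P le A \<longleftrightarrow> A \<subseteq> P \<and> (\<forall>a\<in>A. \<forall>b\<in>P. le b a \<longrightarrow> b \<in> A)"

definition Qsets :: "'a set \<Rightarrow> ('a \<Rightarrow> 'a \<Rightarrow> bool) \<Rightarrow> 'a set set" where
  "Qsets P le = {A. down_set P le A \<and> A \<noteq> {}}"

definition gmap :: "('a \<Rightarrow> 'b) \<Rightarrow> 'a set \<Rightarrow> 'b set" where
  "gmap f A = f ` A"

definition ginv :: "'a set \<Rightarrow> ('a \<Rightarrow> 'a \<Rightarrow> bool) \<Rightarrow> ('a \<Rightarrow> 'b) \<Rightarrow> 'b set \<Rightarrow> 'a set set" where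
  "ginv P le f A' = {A \<in> Qsets P le. gmap f A = A'}"

definition gprime :: "'a set \<Rightarrow> ('a \<Rightarrow> 'a \<Rightarrow> bool) \<Rightarrow> ('a \<Rightarrow> 'b) \<Rightarrow> 'b set \<Rightarrow> 'a set" where
  "gprime P le f A' = \<Union> (ginv P le f A')"

end

theory Submission
  imports Defs
begin

theorem lemma12:
  fixes P :: "'a set" and le :: "'a \<Rightarrow> 'a \<Rightarrow> bool" and f :: "'a \<Rightarrow> 'b" and a' :: 'b
  assumes fin: "finite P"
    and po: "poset_on P le"
    and bot: "\<exists>z\<in>P. \<forall>x\<in>P. le z x"
    and top: "\<exists>t\<in>P. \<forall>x\<in>P. le x t"
    and D: "\<And>a' b' a. a' \<in> f ` P \<Longrightarrow> b' \<in> f ` P \<Longrightarrow> quot_le P le f b' a' \<Longrightarrow>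
              a \<in> P \<Longrightarrow> f a = a' \<Longrightarrow> \<exists>b\<in>P. f b = b' \<and> le b a"
    and U: "\<And>a' b' b. a' \<in> f ` P \<Longrightarrow> b' \<in> f ` P \<Longrightarrow> quot_le P le f b' a' \<Longrightarrow>
              b \<in> P \<Longrightarrow> f b = b' \<Longrightarrow> \<exists>a\<in>P. f a = a' \<and> le b a"
    and S: "\<And>a b c. a \<in> P \<Longrightarrow> b \<in> P \<Longrightarrow> c \<in> P \<Longrightarrow> le c b \<Longrightarrow> le b a \<Longrightarrow>
              f c = f a \<Longrightarrow> f b = f a"
    and a'P: "a' \<in> f ` P"
  shows "{b' \<in> f ` P. quot_le P le f b' a'} \<in> Qsets (f ` P) (quot_le P le f)
     \<and> gprime P le f {b' \<in> f ` P. quot_le P le f b' a'}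
         = {b \<in> P. \<exists>a\<in>P. f a = a' \<and> le b a}"
proof -
  have refl: "\<And>x. x \<in> P \<Longrightarrow> le x x" and trans: "\<And>x y z. x \<in> P \<Longrightarrow> y \<in> P \<Longrightarrow> z \<in> P \<Longrightarrow> le x y \<Longrightarrow> le y z \<Longrightarrow> le x z"
    using po unfolding poset_on_def by blast+
  obtain a0 where a0: "a0 \<in> P" "f a0 = a'" using a'P by blast
  define A' where "A' = {b' \<in> f ` P. quot_le P le f b' a'}"
  define L where "L = {b \<in> P. \<exists>a\<in>P. f a = a' \<and> le b a}"
  have qtrans: "quot_le P le f c' a'" if t: "c' \<in> f ` P" "b' \<in> f ` P" "quot_le P le f c' b'" "quot_le P le f b' a'" for c' b'
  proof -
    obtain c where c: "c \<in> P" "f c = c'" using t(1) by blast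
    obtain b where b: "b \<in> P" "f b = b'" "le c b" using U[OF t(2) t(1) t(3) c] by blast
    obtain a where a: "a \<in> P" "f a = a'" "le b a" using U[OF a'P t(2) t(4) b(1,2)] by blast
    show ?thesis unfolding quot_le_def using a b c trans by blast
  qed
  have a'A: "a' \<in> A'" unfolding A'_def quot_le_def using a0 refl a'P by blast
  have Q1: "A' \<in> Qsets (f ` P) (quot_le P le f)"
    unfolding Qsets_def down_set_def using a'A qtrans unfolding A'_def by blast
  have fL: "gmap f L = A'"
  proof
    show "gmap f L \<subseteq> A'" unfolding gmap_def L_def A'_def quot_le_def by blast
    show "A' \<subseteq> gmap f L"
    proof
      fix b' assume "b' \<in> A'"
      then have h: "b' \<in> f ` P" "quot_le P le f b' a'" unfolding A'_def by auto
      obtain b where "b \<in> P" "f b = b'" "le b a0" using D[OF a'P h a0] by blast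
      then show "b' \<in> gmap f L" unfolding gmap_def L_def using a0 by blast
    qed
  qed
  have LQ: "L \<in> Qsets P le"
    unfolding Qsets_def down_set_def L_def using a0 refl trans by blast
  have "gprime P le f A' = L"
  proof
    show "L \<subseteq> gprime P le f A'" unfolding gprime_def ginv_def using LQ fL by blast
    show "gprime P le f A' \<subseteq> L"
    proof
      fix x assume "x \<in> gprime P le f A'"
      then obtain A where A: "A \<in> Qsets P le" "gmap f A = A'" "x \<in> A"
        unfolding gprime_def ginv_def by blast
      have xP: "x \<in> P" using A unfolding Qsets_def down_set_def by blast
      have "f x \<in> A'" using A unfolding gmap_def by blast
      then have h: "f x \<in> f ` P" "quot_le P le f (f x) a'" unfolding A'_def by auto
      obtain a where "a \<in> P" "f a = a'" "le x a" using U[OF a'P h xP] by blast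
      then show "x \<in> L" unfolding L_def using xP by blast
    qed
  qed
  then show ?thesis using Q1 unfolding A'_def L_def by simp
qed

end
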